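(* Let $H$ be a digraph (possibly with loops) and let $D$ be an $H$-colored $3$-quasi-transitive digraph. For every $k \geq 5$, $D$ has a $(k,H)$-kernel.
   Context: All digraphs are finite. A digraph $D$ is $3$-quasi-transitive if for all distinct $u,v\in V(D)$, whenever there is a directed $uv$-path of length $3$, $u$ and $v$ are joined by an arc (in some direction). $D$ has no loops and comes with a map $\rho: A(D)\to V(H)$. For a walk $W=(x_0,\ldots,x_n)$ in $D$, there is an obstruction on $x_i$ if $(\rho(x_{i-1},x_i),\rho(x_i,x_{i+1})) \notin A(H)$; for an open walk this is considered at internal vertices $x_i$, $1\le i\le n-1$, for a closed walk at all $i\in\{0,\ldots,n-1\}$ with indices modulo $n$. $O_H(W)$ is the set of indices with an obstruction; the $H$-length is $l_H(W)=|O_H(W)|+1$ for open $W$ and $|O_H(W)|$ for closed $W$. A $(k,H)$-kernel ($k\ge2$) is a set $S\subseteq V(D)$ such that for every two distinct $u,v\in S$ every directed $uv$-path in $D$ has $H$-length at least $k$, and for every $x\in V(D)\setminus S$ there is a directed path from $x$ to a vertex of $S$ of $H$-length at most $k-1$. *)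

theory Defs
  imports Main
begin

definition digraph :: "'a set \<Rightarrow> ('a \<times> 'a) set \<Rightarrow> bool" where
  "digraph V A \<longleftrightarrow> A \<subseteq> V \<times> V"

definition loopless :: "('a \<times> 'a) set \<Rightarrow> bool" where
  "loopless A \<longleftrightarrow> (\<forall>x. (x, x) \<notin> A)"

definition H_colored :: "('a \<times> 'a) set \<Rightarrow> 'c set \<Rightarrow> ('a \<times> 'a \<Rightarrow> 'c) \<Rightarrow> bool" where
  "H_colored A VH rho \<longleftrightarrow> (\<forall>e\<in>A. rho e \<in> VH)"

text \<open>A directed walk is a nonempty list of vertices with consecutive arcs;
  its length is the number of arcs (length of the list minus one).\<close>
definition is_walk :: "('a \<times> 'a) set \<Rightarrow> 'a list \<Rightarrow> bool" where
  "is_walk A xs \<longleftrightarrow> xs \<noteq> [] \<and> (\<forall>i. Suc i < length xs \<longrightarrow> (xs ! i, xs ! Suc i) \<in> A)"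

definition is_path :: "('a \<times> 'a) set \<Rightarrow> 'a list \<Rightarrow> bool" where
  "is_path A xs \<longleftrightarrow> is_walk A xs \<and> distinct xs"

definition uv_path :: "('a \<times> 'a) set \<Rightarrow> 'a \<Rightarrow> 'a \<Rightarrow> 'a list \<Rightarrow> bool" where
  "uv_path A u v xs \<longleftrightarrow> is_path A xs \<and> hd xs = u \<and> last xs = v"

definition three_quasi_transitive :: "'a set \<Rightarrow> ('a \<times> 'a) set \<Rightarrow> bool" where
  "three_quasi_transitive V A \<longleftrightarrow>
     (\<forall>u\<in>V. \<forall>v\<in>V. u \<noteq> v \<longrightarrow>
        (\<exists>xs. uv_path A u v xs \<and> length xs = 4) \<longrightarrow> (u, v) \<in> A \<or> (v, u) \<in> A)"

definition obstructions_open ::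
  "('c \<times> 'c) set \<Rightarrow> ('a \<times> 'a \<Rightarrow> 'c) \<Rightarrow> 'a list \<Rightarrow> nat set" where
  "obstructions_open AH rho xs =
     {i. 1 \<le> i \<and> Suc i < length xs \<and>
         (rho (xs ! (i - 1), xs ! i), rho (xs ! i, xs ! Suc i)) \<notin> AH}"

definition H_length_open ::
  "('c \<times> 'c) set \<Rightarrow> ('a \<times> 'a \<Rightarrow> 'c) \<Rightarrow> 'a list \<Rightarrow> nat" where
  "H_length_open AH rho xs = card (obstructions_open AH rho xs) + 1"

definition kH_kernel ::
  "'a set \<Rightarrow> ('a \<times> 'a) set \<Rightarrow> ('c \<times> 'c) set \<Rightarrow> ('a \<times> 'a \<Rightarrow> 'c) \<Rightarrow> nat \<Rightarrow> 'a set \<Rightarrow> bool" where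
  "kH_kernel V A AH rho k S \<longleftrightarrow> S \<subseteq> V \<and>
     (\<forall>u\<in>S. \<forall>v\<in>S. u \<noteq> v \<longrightarrow>
        (\<forall>xs. uv_path A u v xs \<longrightarrow> H_length_open AH rho xs \<ge> k)) \<and>
     (\<forall>x\<in>V - S. \<exists>v\<in>S. \<exists>xs. uv_path A x v xs \<and> H_length_open AH rho xs \<le> k - 1)"

end

theory Submission
  imports Defs
begin


lemma walk_single[simp]: "is_walk A [x]"
  by (simp add: is_walk_def)

lemma walk_Cons2: "is_walk A (x # y # zs) \<longleftrightarrow> (x, y) \<in> A \<and> is_walk A (y # zs)"
proof
  assume h: "is_walk A (x # y # zs)"
  have hh: "\<forall>i. Suc i < length (x # y # zs) \<longrightarrow> ((x # y # zs) ! i, (x # y # zs) ! Suc i) \<in> A"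
    using h unfolding is_walk_def by blast
  have "(x, y) \<in> A" using spec[OF hh, of 0] by simp
  moreover have "is_walk A (y # zs)" unfolding is_walk_def
  proof (intro conjI allI impI)
    fix i assume "Suc i < length (y # zs)"
    then have "Suc (Suc i) < length (x # y # zs)" by simp
    then show "((y # zs) ! i, (y # zs) ! Suc i) \<in> A" using spec[OF hh, of "Suc i"] by simp
  qed simp
  ultimately show "(x, y) \<in> A \<and> is_walk A (y # zs)" by simp
next
  assume h: "(x, y) \<in> A \<and> is_walk A (y # zs)"
  show "is_walk A (x # y # zs)" unfolding is_walk_def
  proof (intro conjI allI impI)
    fix i assume i: "Suc i < length (x # y # zs)"
    show "((x # y # zs) ! i, (x # y # zs) ! Suc i) \<in> A"
    proof (cases i)
      case 0 then show ?thesis using h by simp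
    next
      case (Suc j)
      then have "Suc j < length (y # zs)" using i by simp
      then show ?thesis using h Suc unfolding is_walk_def by simp
    qed
  qed simp
qed

lemma walk_append: "xs \<noteq> [] \<Longrightarrow> ys \<noteq> [] \<Longrightarrow>
   is_walk A (xs @ ys) \<longleftrightarrow> is_walk A xs \<and> is_walk A ys \<and> (last xs, hd ys) \<in> A"
proof (induction xs)
  case Nil then show ?case by simp
next
  case (Cons x xs)
  show ?case
  proof (cases xs)
    case Nil
    then show ?thesis using Cons.prems by (cases ys) (auto simp: walk_Cons2)
  next
    case (Cons z zs)
    then show ?thesis using Cons.IH Cons.prems by (auto simp: walk_Cons2)
  qed
qed

lemma walk_Nil[simp]: "\<not> is_walk A []"
  by (simp add: is_walk_def)

lemma walk_relpow: "is_walk A xs \<Longrightarrow> (hd xs, last xs) \<in> A ^^ (length xs - 1)"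
proof (induction xs)
  case Nil then show ?case by simp
next
  case (Cons x xs)
  show ?case
  proof (cases xs)
    case Nil then show ?thesis by simp
  next
    case (Cons z zs)
    then have "(x, z) \<in> A" "is_walk A xs" using Cons.prems by (auto simp: walk_Cons2)
    then have "(hd xs, last xs) \<in> A ^^ (length xs - 1)" using Cons.IH by simp
    then have "(x, last xs) \<in> A ^^ Suc (length xs - 1)"
      using \<open>(x,z) \<in> A\<close> Cons by (intro relpow_Suc_I2[of x z]) simp_all
    then show ?thesis using Cons by simp
  qed
qed

lemma relpow_walk: "(x, y) \<in> A ^^ n \<Longrightarrow> \<exists>xs. is_walk A xs \<and> hd xs = x \<and> last xs = y \<and> length xs = Suc n"
proof (induction n arbitrary: x)
  case 0 then show ?case by (intro exI[of _ "[x]"]) simp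
next
  case (Suc n)
  then obtain z where z: "(x, z) \<in> A" "(z, y) \<in> A ^^ n" by (meson relpow_Suc_E2)
  then obtain xs where xs: "is_walk A xs" "hd xs = z" "last xs = y" "length xs = Suc n" using Suc.IH by blast
  then have "xs \<noteq> []" by auto
  then have "is_walk A (x # xs)" using xs z by (cases xs) (auto simp: walk_Cons2)
  then show ?case using xs \<open>xs \<noteq> []\<close> by (intro exI[of _ "x # xs"]) simp
qed

lemma walk_shortcut: "is_walk A xs \<Longrightarrow> \<not> distinct xs \<Longrightarrow>
   \<exists>ys. is_walk A ys \<and> hd ys = hd xs \<and> last ys = last xs \<and> length ys < length xs"
proof -
  assume w: "is_walk A xs" and nd: "\<not> distinct xs"
  obtain as bs cs y where eq: "xs = as @ [y] @ bs @ [y] @ cs" using not_distinct_decomp[OF nd] by blast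
  have w2: "is_walk A ([y] @ cs)"
  proof -
    have "is_walk A ((as @ [y] @ bs) @ ([y] @ cs))" using w eq by simp
    then show ?thesis using walk_append[of "as @ [y] @ bs" "[y] @ cs"] by simp
  qed
  have ys: "is_walk A (as @ [y] @ cs)"
  proof (cases as)
    case Nil then show ?thesis using w2 by simp
  next
    case (Cons a aa)
    have "is_walk A (as @ ([y] @ bs @ [y] @ cs))" using w eq by simp
    then have "is_walk A as" "(last as, y) \<in> A" using walk_append[of as "[y] @ bs @ [y] @ cs"] Cons by auto
    then show ?thesis using walk_append[of as "[y] @ cs"] w2 Cons by simp
  qed
  show ?thesis
    by (intro exI[of _ "as @ [y] @ cs"]) (use ys eq in \<open>auto simp: hd_append\<close>)
qed

lemma relpow_path: "(x, y) \<in> A ^^ n \<Longrightarrow> \<exists>xs. uv_path A x y xs \<and> length xs \<le> Suc n"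
proof (induction n arbitrary: rule: less_induct)
  case (less n)
  obtain xs where xs: "is_walk A xs" "hd xs = x" "last xs = y" "length xs = Suc n"
    using relpow_walk[OF less.prems] by blast
  show ?case
  proof (cases "distinct xs")
    case True then show ?thesis using xs unfolding uv_path_def is_path_def by auto
  next
    case False
    then obtain ys where ys: "is_walk A ys" "hd ys = x" "last ys = y" "length ys < Suc n"
      using walk_shortcut[OF xs(1)] xs by metis
    have "(x, y) \<in> A ^^ (length ys - 1)" using walk_relpow[OF ys(1)] ys by simp
    moreover have "length ys - 1 < n" using ys(4) ys(1) by (cases ys) auto
    ultimately obtain zs where "uv_path A x y zs" "length zs \<le> Suc (length ys - 1)" using less.IH by blast
    then show ?thesis using \<open>length ys - 1 < n\<close> by (intro exI[of _ zs]) simp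
  qed
qed

lemma H_length_bound: "H_length_open AH rho xs \<le> length xs - 2 + 1"
proof -
  have "obstructions_open AH rho xs \<subseteq> {1..<length xs - 1}"
    unfolding obstructions_open_def by auto
  then have "card (obstructions_open AH rho xs) \<le> length xs - 2"
    using card_mono[of "{1..<length xs - 1}"] by (simp add: numeral_2_eq_2)
  then show ?thesis unfolding H_length_open_def by simp
qed

lemma walk4: "is_walk A [a, b, c, d] \<longleftrightarrow> (a, b) \<in> A \<and> (b, c) \<in> A \<and> (c, d) \<in> A"
  by (simp add: walk_Cons2)

lemma qt3:
  assumes "three_quasi_transitive V A" "A \<subseteq> V \<times> V"
    "(a, b) \<in> A" "(b, c) \<in> A" "(c, d) \<in> A" "distinct [a, b, c, d]"
  shows "(a, d) \<in> A \<or> (d, a) \<in> A"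
proof -
  have "a \<in> V" "d \<in> V" using assms by auto
  moreover have "uv_path A a d [a, b, c, d]" using assms unfolding uv_path_def is_path_def walk4 by simp
  ultimately show ?thesis using assms(1,6) unfolding three_quasi_transitive_def by fastforce
qed



lemma relpow3: "(x, y) \<in> A ^^ 3 \<Longrightarrow> \<exists>a b. (x, a) \<in> A \<and> (a, b) \<in> A \<and> (b, y) \<in> A"
  by (auto simp: numeral_eq_Suc)

lemma relpow5: "(x, y) \<in> A ^^ 5 \<Longrightarrow>
  \<exists>a b c d. (x, a) \<in> A \<and> (a, b) \<in> A \<and> (b, c) \<in> A \<and> (c, d) \<in> A \<and> (d, y) \<in> A"
  by (auto simp: numeral_eq_Suc)

definition reach_le :: "('a \<times> 'a) set \<Rightarrow> 'a \<Rightarrow> nat \<Rightarrow> 'a \<Rightarrow> bool" where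
  "reach_le A s j u \<longleftrightarrow> (\<exists>i\<le>j. (u, s) \<in> A ^^ i)"

lemma reach_le_step: "(u, v) \<in> A \<Longrightarrow> reach_le A s j v \<Longrightarrow> reach_le A s (Suc j) u"
proof -
  assume uv: "(u, v) \<in> A" and r: "reach_le A s j v"
  then obtain i where "i \<le> j" "(v, s) \<in> A ^^ i" unfolding reach_le_def by blast
  then have "Suc i \<le> Suc j" "(u, s) \<in> A ^^ Suc i" using relpow_Suc_I2[OF uv] by auto
  then show ?thesis unfolding reach_le_def by blast
qed

lemma reach_le_mono: "reach_le A s j u \<Longrightarrow> j \<le> j' \<Longrightarrow> reach_le A s j' u"
  unfolding reach_le_def using order_trans by blast

lemma reach_le_0: "reach_le A s 0 s"
  unfolding reach_le_def by auto

lemma reach_neq: "reach_le A s a u \<Longrightarrow> \<not> reach_le A s b v \<Longrightarrow> a \<le> b \<Longrightarrow> u \<noteq> v"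
  using reach_le_mono[of A s a u b] by auto

definition indeg :: "('a \<times> 'a) set \<Rightarrow> 'a \<Rightarrow> nat" where
  "indeg A u = card {w. (w, u) \<in> A}"

lemma key:
  assumes fin: "finite V" and dg: "A \<subseteq> V \<times> V" and ll: "loopless A"
    and qt: "three_quasi_transitive V A"
    and st: "(t, s) \<in> A\<^sup>*"
    and mx: "\<And>u. (u, s) \<in> A\<^sup>* \<Longrightarrow> (s, u) \<in> A\<^sup>* \<Longrightarrow> indeg A u \<le> indeg A s"
  shows "reach_le A s 4 t"
proof (rule ccontr)
  assume nr: "\<not> reach_le A s 4 t"
  obtain n where n: "(t, s) \<in> A ^^ n" using st rtrancl_power by blast
  define m where "m = (LEAST n. (t, s) \<in> A ^^ n)"
  have m: "(t, s) \<in> A ^^ m" unfolding m_def using n by (rule LeastI)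
  have mmin: "\<And>i. i < m \<Longrightarrow> (t, s) \<notin> A ^^ i" unfolding m_def using not_less_Least by blast
  have "\<not> m \<le> 4" using nr m unfolding reach_le_def by blast
  then have m5: "m \<ge> 5" by simp
  have "(t, s) \<in> A ^^ ((m - 5) + 5)" using m by (simp only: le_add_diff_inverse2[OF m5])
  then obtain y0 where ty0: "(t, y0) \<in> A ^^ (m - 5)" and y0s: "(y0, s) \<in> A ^^ 5"
    unfolding relpow_add by blast
  have f0: "\<not> reach_le A s 4 y0"
  proof
    assume "reach_le A s 4 y0"
    then obtain i where "i \<le> 4" "(y0, s) \<in> A ^^ i" unfolding reach_le_def by blast
    then have "(t, s) \<in> A ^^ (m - 5 + i)" using relpow_trans[OF ty0] by blast
    moreover have "m - 5 + i < m" using \<open>i \<le> 4\<close> m5 by simp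
    ultimately show False using mmin by blast
  qed
  obtain y1 y2 y3 y4 where a: "(y0, y1) \<in> A" "(y1, y2) \<in> A" "(y2, y3) \<in> A" "(y3, y4) \<in> A" "(y4, s) \<in> A"
    using relpow5[OF y0s] by blast
  have p4: "reach_le A s 1 y4" using reach_le_step[OF a(5) reach_le_0] by (simp add: eval_nat_numeral)
  have p3: "reach_le A s 2 y3" using reach_le_step[OF a(4) p4] by (simp add: eval_nat_numeral)
  have p2: "reach_le A s 3 y2" using reach_le_step[OF a(3) p3] by (simp add: eval_nat_numeral)
  have p1: "reach_le A s 4 y1" using reach_le_step[OF a(2) p2] by (simp add: eval_nat_numeral)
  have f1: "\<not> reach_le A s 3 y1" using f0 reach_le_step[OF a(1), of s 3] by (auto simp: eval_nat_numeral)
  have f2: "\<not> reach_le A s 2 y2" using f1 reach_le_step[OF a(2), of s 2] by (auto simp: eval_nat_numeral)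
  have f3: "\<not> reach_le A s 1 y3" using f2 reach_le_step[OF a(3), of s 1] by (auto simp: eval_nat_numeral)
  have f4: "\<not> reach_le A s 0 y4" using f3 reach_le_step[OF a(4), of s 0] by (auto simp: eval_nat_numeral)
  note mono = reach_le_mono[of A s]
  have d0: "y1 \<noteq> y0" using reach_neq[OF p1 f0] by simp
  have d1: "y2 \<noteq> y0" using reach_neq[OF p2 f0] by simp
  have d2: "y3 \<noteq> y0" using reach_neq[OF p3 f0] by simp
  have d3: "y4 \<noteq> y0" using reach_neq[OF p4 f0] by simp
  have d4: "s \<noteq> y0" using reach_neq[OF reach_le_0 f0] by simp
  have d5: "y2 \<noteq> y1" using reach_neq[OF p2 f1] by simp
  have d6: "y3 \<noteq> y1" using reach_neq[OF p3 f1] by simp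
  have d7: "y4 \<noteq> y1" using reach_neq[OF p4 f1] by simp
  have d8: "s \<noteq> y1" using reach_neq[OF reach_le_0 f1] by simp
  have d9: "y3 \<noteq> y2" using reach_neq[OF p3 f2] by simp
  have d10: "y4 \<noteq> y2" using reach_neq[OF p4 f2] by simp
  have d11: "s \<noteq> y2" using reach_neq[OF reach_le_0 f2] by simp
  have d12: "y4 \<noteq> y3" using reach_neq[OF p4 f3] by simp
  have d13: "s \<noteq> y3" using reach_neq[OF reach_le_0 f3] by simp
  have d14: "s \<noteq> y4" using reach_neq[OF reach_le_0 f4] by simp
  have d: "y0 \<noteq> y1" "y0 \<noteq> y2" "y0 \<noteq> y3" "y0 \<noteq> y4" "y0 \<noteq> s"
    "y1 \<noteq> y2" "y1 \<noteq> y3" "y1 \<noteq> y4" "y1 \<noteq> s"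
    "y2 \<noteq> y3" "y2 \<noteq> y4" "y2 \<noteq> s" "y3 \<noteq> y4" "y3 \<noteq> s" "y4 \<noteq> s"
    using d0 d1 d2 d3 d4 d5 d6 d7 d8 d9 d10 d11 d12 d13 d14 by auto
  have b1: "(y3, y0) \<in> A"
  proof -
    have "(y0, y3) \<in> A \<or> (y3, y0) \<in> A" using qt3[OF qt dg a(1,2,3)] d by simp
    moreover have "(y0, y3) \<notin> A"
    proof
      assume "(y0, y3) \<in> A"
      from reach_le_mono[OF reach_le_step[OF this p3], of 4] show False using f0 by simp
    qed
    ultimately show ?thesis by blast
  qed
  have b2: "(s, y2) \<in> A"
  proof -
    have "(y2, s) \<in> A \<or> (s, y2) \<in> A" using qt3[OF qt dg a(3,4,5)] d by simp
    moreover have "(y2, s) \<notin> A"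
    proof
      assume "(y2, s) \<in> A"
      from reach_le_mono[OF reach_le_step[OF this reach_le_0], of 2] show False using f2 by simp
    qed
    ultimately show ?thesis by blast
  qed
  have b3: "(s, y0) \<in> A"
  proof -
    have "(s, y0) \<in> A \<or> (y0, s) \<in> A" using qt3[OF qt dg b2 a(3) b1] d by auto
    moreover have "(y0, s) \<notin> A"
    proof
      assume "(y0, s) \<in> A"
      from reach_le_mono[OF reach_le_step[OF this reach_le_0], of 4] show False using f0 by simp
    qed
    ultimately show ?thesis by blast
  qed
  have b4: "(w, y1) \<in> A" if w: "(w, s) \<in> A" for w
  proof -
    have pw: "reach_le A s 1 w" using reach_le_step[OF w reach_le_0] by simp
    have "w \<noteq> s" using w ll unfolding loopless_def by auto
    moreover have "w \<noteq> y0" "w \<noteq> y1" using reach_neq[OF pw f0] reach_neq[OF pw f1] by auto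
    ultimately have "(w, y1) \<in> A \<or> (y1, w) \<in> A" using qt3[OF qt dg w b3 a(1)] d by auto
    moreover have "(y1, w) \<notin> A"
    proof
      assume "(y1, w) \<in> A"
      from reach_le_mono[OF reach_le_step[OF this pw], of 3] show False using f1 by simp
    qed
    ultimately show ?thesis by blast
  qed
  have y0n: "(y0, s) \<notin> A"
  proof
    assume "(y0, s) \<in> A"
    from reach_le_mono[OF reach_le_step[OF this reach_le_0], of 4] show False using f0 by simp
  qed
  have sub: "insert y0 {w. (w, s) \<in> A} \<subseteq> {w. (w, y1) \<in> A}" using b4 a(1) by auto
  have finy: "finite {w. (w, y1) \<in> A}" by (rule finite_subset[OF _ fin]) (use dg in auto)
  have fins: "finite {w. (w, s) \<in> A}" by (rule finite_subset[OF _ fin]) (use dg in auto)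
  have "indeg A s + 1 \<le> indeg A y1"
    using card_mono[OF finy sub] y0n fins unfolding indeg_def by simp
  moreover have "indeg A y1 \<le> indeg A s"
  proof (rule mx)
    show "(y1, s) \<in> A\<^sup>*" using a(2-5) by (meson converse_rtrancl_into_rtrancl r_into_rtrancl)
    show "(s, y1) \<in> A\<^sup>*" using b3 a(1) by (meson rtrancl.simps r_into_rtrancl)
  qed
  ultimately show False by simp
qed

definition terminal :: "('a \<times> 'a) set \<Rightarrow> 'a \<Rightarrow> bool" where
  "terminal A v \<longleftrightarrow> (\<forall>u. (v, u) \<in> A\<^sup>* \<longrightarrow> (u, v) \<in> A\<^sup>*)"

lemma back_reach:
  assumes dg: "A \<subseteq> V \<times> V" and qt: "three_quasi_transitive V A"
  shows "(x, s) \<in> A ^^ m \<Longrightarrow> (\<And>i. i < m \<Longrightarrow> (x, s) \<notin> A ^^ i) \<Longrightarrow> m \<ge> 3 \<Longrightarrow> (s, x) \<in> A\<^sup>*"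
proof (induction m arbitrary: x rule: less_induct)
  case (less m)
  note m = less.prems(1) and mmin = less.prems(2) and m3 = less.prems(3)
  have "(x, s) \<in> A ^^ (3 + (m - 3))" using m by (simp only: le_add_diff_inverse[OF m3])
  then obtain x3 where xx3: "(x, x3) \<in> A ^^ 3" and x3s: "(x3, s) \<in> A ^^ (m - 3)"
    unfolding relpow_add by blast
  obtain x1 x2 where a: "(x, x1) \<in> A" "(x1, x2) \<in> A" "(x2, x3) \<in> A" using relpow3[OF xx3] by blast
  have s2: "(x2, s) \<in> A ^^ Suc (m - 3)" using relpow_Suc_I2[OF a(3) x3s] .
  have s1: "(x1, s) \<in> A ^^ Suc (Suc (m - 3))" using relpow_Suc_I2[OF a(2) s2] .
  have h: "\<And>j. j < m \<Longrightarrow> (x, s) \<notin> A ^^ j" by (rule mmin)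
  have d: "distinct [x, x1, x2, x3]"
  proof -
    have lt: "Suc (Suc (m - 3)) < m" "Suc (m - 3) < m" "m - 3 < m" using m3 by auto
    have "x \<noteq> x1" using h[OF lt(1)] s1 by metis
    moreover have "x \<noteq> x2" using h[OF lt(2)] s2 by metis
    moreover have "x \<noteq> x3" using h[OF lt(3)] x3s by metis
    moreover have "x1 \<noteq> x2"
    proof
      assume e: "x1 = x2"
      have "(x, x2) \<in> A" using a(1) e by simp
      from relpow_Suc_I2[OF this s2] show False using h[OF lt(1)] by blast
    qed
    moreover have "x1 \<noteq> x3"
    proof
      assume e: "x1 = x3"
      have "(x, x3) \<in> A" using a(1) e by simp
      from relpow_Suc_I2[OF this x3s] show False using h[OF lt(2)] by blast
    qed
    moreover have "x2 \<noteq> x3"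
    proof
      assume e: "x2 = x3"
      have "(x1, x3) \<in> A" using a(2) e by simp
      from relpow_Suc_I2[OF a(1) relpow_Suc_I2[OF this x3s]] show False using h[OF lt(1)] by blast
    qed
    ultimately show ?thesis by simp
  qed
  have "(x, x3) \<in> A \<or> (x3, x) \<in> A" using qt3[OF qt dg a d] .
  moreover have "(x, x3) \<notin> A"
  proof
    assume "(x, x3) \<in> A"
    from relpow_Suc_I2[OF this x3s] have "(x, s) \<in> A ^^ Suc (m - 3)" .
    moreover have "Suc (m - 3) < m" using m3 by simp
    ultimately show False using h by blast
  qed
  ultimately have "(x3, x) \<in> A" by blast
  then have x3x: "(x3, x) \<in> A" by blast
  show ?case
  proof (cases "m = 3")
    case True
    then have "x3 = s" using x3s by simp
    then show ?thesis using x3x by auto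
  next
    case False
    have s1': "(x1, s) \<in> A ^^ (m - 1)" proof -
      have eq: "Suc (Suc (m - 3)) = m - 1" using m3 by simp
      show ?thesis using s1 unfolding eq .
    qed
    have "(s, x1) \<in> A\<^sup>*"
    proof (rule less.IH[of "m - 1" x1])
      show "m - 1 < m" using m3 by simp
      show "(x1, s) \<in> A ^^ (m - 1)" by (rule s1')
      show "m - 1 \<ge> 3" using m3 False by simp
      show "(x1, s) \<notin> A ^^ i" if "i < m - 1" for i
      proof
        assume "(x1, s) \<in> A ^^ i"
        then have "(x, s) \<in> A ^^ Suc i" using relpow_Suc_I2[OF a(1)] by blast
        moreover have "Suc i < m" using that by simp
        ultimately show False using mmin by blast
      qed
    qed
    moreover have "(x1, x) \<in> A\<^sup>*" using a(2,3) x3x by (meson converse_rtrancl_into_rtrancl r_into_rtrancl)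
    ultimately show ?thesis by (meson rtrancl_trans)
  qed
qed

lemma short:
  assumes dg: "A \<subseteq> V \<times> V" and qt: "three_quasi_transitive V A"
    and ts: "terminal A s" and nt: "\<not> terminal A x" and xs: "(x, s) \<in> A\<^sup>*"
  shows "reach_le A s 2 x"
proof (rule ccontr)
  assume nr: "\<not> reach_le A s 2 x"
  obtain n where n: "(x, s) \<in> A ^^ n" using xs rtrancl_power by blast
  define m where "m = (LEAST n. (x, s) \<in> A ^^ n)"
  have m: "(x, s) \<in> A ^^ m" unfolding m_def using n by (rule LeastI)
  have mmin: "\<And>i. i < m \<Longrightarrow> (x, s) \<notin> A ^^ i" unfolding m_def using not_less_Least by blast
  have "\<not> m \<le> 2" using nr m unfolding reach_le_def by blast
  then have m3: "m \<ge> 3" by simp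
  have sx: "(s, x) \<in> A\<^sup>*" using back_reach[OF dg qt m mmin m3] .
  have "terminal A x" unfolding terminal_def
  proof (intro allI impI)
    fix w assume "(x, w) \<in> A\<^sup>*"
    then have "(s, w) \<in> A\<^sup>*" using sx by (meson rtrancl_trans)
    then have "(w, s) \<in> A\<^sup>*" using ts unfolding terminal_def by blast
    then show "(w, x) \<in> A\<^sup>*" using xs sx by (meson rtrancl_trans)
  qed
  then show False using nt by blast
qed



definition cls :: "('a \<times> 'a) set \<Rightarrow> 'a \<Rightarrow> 'a set" where
  "cls A v = {u. (v, u) \<in> A\<^sup>* \<and> (u, v) \<in> A\<^sup>*}"

definition pick :: "('a \<times> 'a) set \<Rightarrow> 'a set \<Rightarrow> 'a" where
  "pick A C = (SOME s. s \<in> C \<and> (\<forall>u\<in>C. indeg A u \<le> indeg A s))"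

lemma rtrancl_in_V: "(x, u) \<in> A\<^sup>* \<Longrightarrow> A \<subseteq> V \<times> V \<Longrightarrow> x \<in> V \<Longrightarrow> u \<in> V"
  by (induction rule: rtrancl_induct) auto

lemma pick_prop:
  assumes fin: "finite V" and dg: "A \<subseteq> V \<times> V" and x: "x \<in> V"
  shows "pick A (cls A x) \<in> cls A x \<and> (\<forall>u\<in>cls A x. indeg A u \<le> indeg A (pick A (cls A x)))"
proof -
  have sub: "cls A x \<subseteq> V" unfolding cls_def using rtrancl_in_V[OF _ dg x] by blast
  then have f: "finite (cls A x)" using fin finite_subset by blast
  have xin: "x \<in> cls A x" unfolding cls_def by simp
  have "Max (indeg A ` cls A x) \<in> indeg A ` cls A x" using f xin by (intro Max_in) auto
  then obtain s where s: "s \<in> cls A x" "indeg A s = Max (indeg A ` cls A x)" by auto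
  have "\<forall>u\<in>cls A x. indeg A u \<le> indeg A s" using s f by simp
  then have "\<exists>s. s \<in> cls A x \<and> (\<forall>u\<in>cls A x. indeg A u \<le> indeg A s)" using s by blast
  then show ?thesis unfolding pick_def by (rule someI_ex)
qed

lemma terminal_exists:
  assumes fin: "finite V" and dg: "A \<subseteq> V \<times> V" and x: "x \<in> V"
  shows "\<exists>u. (x, u) \<in> A\<^sup>* \<and> terminal A u"
proof -
  define R where "R v = {w. (v, w) \<in> A\<^sup>*}" for v
  have Rfin: "finite (R v)" if "v \<in> V" for v
  proof (rule finite_subset[OF _ fin])
    show "R v \<subseteq> V" unfolding R_def using rtrancl_in_V[OF _ dg that] by blast
  qed
  define P where "P n \<longleftrightarrow> (\<exists>u. (x, u) \<in> A\<^sup>* \<and> card (R u) = n)" for n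
  have "P (card (R x))" unfolding P_def by auto
  then have "P (LEAST n. P n)" by (rule LeastI)
  then obtain u where u: "(x, u) \<in> A\<^sup>*" "card (R u) = (LEAST n. P n)" unfolding P_def by blast
  have uV: "u \<in> V" using rtrancl_in_V[OF u(1) dg x] .
  have "terminal A u" unfolding terminal_def
  proof (intro allI impI)
    fix w assume uw: "(u, w) \<in> A\<^sup>*"
    have wV: "w \<in> V" using rtrancl_in_V[OF uw dg uV] .
    have sub: "R w \<subseteq> R u" unfolding R_def using uw by (auto intro: rtrancl_trans)
    have "(x, w) \<in> A\<^sup>*" using u(1) uw by (rule rtrancl_trans)
    then have "P (card (R w))" unfolding P_def by blast
    then have "(LEAST n. P n) \<le> card (R w)" by (rule Least_le)
    then have "card (R u) \<le> card (R w)" using u(2) by simp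
    moreover have "card (R w) \<le> card (R u)" using card_mono[OF Rfin[OF uV] sub] .
    ultimately have "card (R w) = card (R u)" by simp
    then have "R w = R u" using card_subset_eq[OF Rfin[OF uV] sub] by simp
    moreover have "u \<in> R u" unfolding R_def by simp
    ultimately show "(w, u) \<in> A\<^sup>*" unfolding R_def by blast
  qed
  then show ?thesis using u(1) by blast
qed

lemma reach_path:
  assumes "reach_le A s 4 x" "x \<noteq> s" "k \<ge> 5"
  shows "\<exists>xs. uv_path A x s xs \<and> H_length_open AH rho xs \<le> k - 1"
proof -
  obtain i where i: "i \<le> 4" "(x, s) \<in> A ^^ i" using assms(1) unfolding reach_le_def by blast
  obtain xs where xs: "uv_path A x s xs" "length xs \<le> Suc i" using relpow_path[OF i(2)] by blast
  have "H_length_open AH rho xs \<le> length xs - 2 + 1" by (rule H_length_bound)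
  also have "\<dots> \<le> k - 1" using xs(2) i(1) assms(3) by arith
  finally show ?thesis using xs(1) by blast
qed

theorem theorem19:
  fixes V :: "'a set" and A :: "('a \<times> 'a) set"
    and VH :: "'c set" and AH :: "('c \<times> 'c) set"
    and rho :: "'a \<times> 'a \<Rightarrow> 'c" and k :: nat
  assumes "finite V" and "digraph V A" and "loopless A"
    and "finite VH" and "digraph VH AH"
    and "H_colored A VH rho"
    and "three_quasi_transitive V A"
    and "k \<ge> 5"
  shows "\<exists>S. kH_kernel V A AH rho k S"
proof -
  note fin = assms(1) and ll = assms(3) and qt = assms(7) and k5 = assms(8)
  have dg: "A \<subseteq> V \<times> V" using assms(2) unfolding digraph_def .
  define S where "S = {s \<in> V. terminal A s \<and> s = pick A (cls A s)}"
  have cls_eq: "cls A s = cls A x" if "terminal A x" "s \<in> cls A x" for s x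
  proof -
    have xs: "(x, s) \<in> A\<^sup>*" "(s, x) \<in> A\<^sup>*" using that(2) unfolding cls_def by auto
    show ?thesis unfolding cls_def using xs rtrancl_trans[of _ _ A] by blast
  qed
  have term_cls: "terminal A s" if "terminal A x" "s \<in> cls A x" for s x
    unfolding terminal_def
  proof (intro allI impI)
    fix w assume sw: "(s, w) \<in> A\<^sup>*"
    have xs: "(x, s) \<in> A\<^sup>*" "(s, x) \<in> A\<^sup>*" using that(2) unfolding cls_def by auto
    have "(x, w) \<in> A\<^sup>*" using xs(1) sw by (rule rtrancl_trans)
    then have "(w, x) \<in> A\<^sup>*" using that(1) unfolding terminal_def by blast
    then show "(w, s) \<in> A\<^sup>*" using xs(1) by (rule rtrancl_trans)
  qed
  have pickS: "pick A (cls A x) \<in> S" if x: "x \<in> V" "terminal A x" for x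
  proof -
    let ?s = "pick A (cls A x)"
    have sin: "?s \<in> cls A x" using pick_prop[OF fin dg x(1)] by blast
    have "?s \<in> V" using sin rtrancl_in_V[OF _ dg x(1)] unfolding cls_def by blast
    moreover have "terminal A ?s" using term_cls[OF x(2) sin] .
    moreover have "cls A ?s = cls A x" using cls_eq[OF x(2) sin] .
    ultimately show ?thesis unfolding S_def by simp
  qed
  have "kH_kernel V A AH rho k S"
    unfolding kH_kernel_def
  proof (intro conjI ballI impI allI)
    show "S \<subseteq> V" unfolding S_def by blast
  next
    fix u v xs assume u: "u \<in> S" and v: "v \<in> S" and uv: "u \<noteq> v" and p: "uv_path A u v xs"
    have "(u, v) \<in> A ^^ (length xs - 1)" using walk_relpow[of A xs] p unfolding uv_path_def is_path_def by auto
    then have r: "(u, v) \<in> A\<^sup>*" by (rule relpow_imp_rtrancl)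
    have tu: "terminal A u" using u unfolding S_def by blast
    then have "v \<in> cls A u" using r unfolding cls_def terminal_def by blast
    then have "cls A v = cls A u" by (rule cls_eq[OF tu])
    then have "u = v" using u v unfolding S_def by auto
    then show "k \<le> H_length_open AH rho xs" using uv by blast
  next
    fix x assume x: "x \<in> V - S"
    show "\<exists>v\<in>S. \<exists>xs. uv_path A x v xs \<and> H_length_open AH rho xs \<le> k - 1"
    proof (cases "terminal A x")
      case True
      let ?s = "pick A (cls A x)"
      have sS: "?s \<in> S" using pickS x True by blast
      have pp: "?s \<in> cls A x \<and> (\<forall>u\<in>cls A x. indeg A u \<le> indeg A ?s)" using pick_prop[OF fin dg] x by blast
      have ce: "cls A ?s = cls A x" using cls_eq[OF True] pp by blast
      have "reach_le A ?s 4 x"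
      proof (rule key[OF fin dg ll qt])
        show "(x, ?s) \<in> A\<^sup>*" using pp unfolding cls_def by blast
        fix u assume "(u, ?s) \<in> A\<^sup>*" "(?s, u) \<in> A\<^sup>*"
        then have "u \<in> cls A ?s" unfolding cls_def by blast
        then show "indeg A u \<le> indeg A ?s" using pp ce by blast
      qed
      moreover have "x \<noteq> ?s" using x sS by (metis DiffD2)
      ultimately obtain xs where "uv_path A x ?s xs" "H_length_open AH rho xs \<le> k - 1"
        using reach_path[OF _ _ k5, of A ?s x AH rho] by blast
      then show ?thesis using sS by blast
    next
      case False
      obtain u where u: "(x, u) \<in> A\<^sup>*" "terminal A u" using terminal_exists[OF fin dg] x by blast
      have uV: "u \<in> V" using rtrancl_in_V[OF u(1) dg] x by blast
      let ?s = "pick A (cls A u)"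
      have sS: "?s \<in> S" using pickS[OF uV u(2)] .
      have "?s \<in> cls A u" using pick_prop[OF fin dg uV] by blast
      then have "(u, ?s) \<in> A\<^sup>*" unfolding cls_def by blast
      then have xs: "(x, ?s) \<in> A\<^sup>*" using u(1) by (meson rtrancl_trans)
      have ts: "terminal A ?s" using sS unfolding S_def by blast
      have "reach_le A ?s 2 x" using short[OF dg qt ts False xs] .
      then have "reach_le A ?s 4 x" by (rule reach_le_mono) simp
      moreover have "x \<noteq> ?s" using x sS by (metis DiffD2)
      ultimately obtain xs where "uv_path A x ?s xs" "H_length_open AH rho xs \<le> k - 1"
        using reach_path[OF _ _ k5, of A ?s x AH rho] by blast
      then show ?thesis using sS by blast
    qed
  qed
  then show ?thesis by blast
qed

end
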